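(* Let $G$ be the directed graph with distinct vertices $v_1,v_2,\dots$, $w_2,w_3,\dots$, and $u_2,u_3,\dots$; write $w_1:=v_1$. Its edges are $v_i\to v_{i+1}$ ($i\ge1$), $w_i\to w_{i+1}$ ($i\ge1$), $w_i\to u_i$ ($i\ge2$), and $u_i\to v_{i+1}$ ($i\ge2$), and birthdates are $t(v_i)=t(w_i)=i$, $t(u_i)=i+\tfrac12$. Then $(G,t)$ is an infinite biosphere, and $v_2$ does not belong to any maximal element of $\mathrm{IAP}\cap\mathrm{CA}\cap\mathrm{REF}$.
   Context: An infinite biosphere is a directed graph $G$ together with a function $t$ assigning a real number $t(v)$ to each vertex, such that: (1) if $v$ is a parent of $w$ (edge from $v$ to $w$) then $t(v)<t(w)$; (2) for every $r\in\mathbb R$ at most finitely many vertices $v$ have $t(v)<r$; (3) every vertex has finitely many children; (4) $G$ is infinite. $v$ is an ancestor of $w$ (and $w$ a descendant of $v$) if there is a directed path $v=v_1,\dots,v_n=w$ with $n>1$. $\mathrm{IAP}$: sets $S$ of vertices such that no $v\in S$ has both infinitely many descendants in $S$ and infinitely many non-descendants in $S$. $\mathrm{CA}$: sets $S$ for which there exists $v\in S$ such that every $w\in S$ with $w\neq v$ is a descendant of $v$. $\mathrm{REF}$: sets $S$ such that every $v\in S$ with infinitely many descendants in $G$ has infinitely many descendants in $S$. A maximal element of a family of sets is a member not properly contained in any other member. *)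

theory Defs
  imports Main Complex_Main
begin

definition biosphere :: "'a set \<Rightarrow> ('a \<times> 'a) set \<Rightarrow> ('a \<Rightarrow> real) \<Rightarrow> bool" where
  "biosphere VV E t \<longleftrightarrow>
     E \<subseteq> VV \<times> VV \<and>
     (\<forall>v w. (v, w) \<in> E \<longrightarrow> t v < t w) \<and>
     (\<forall>r::real. finite {v \<in> VV. t v < r}) \<and>
     (\<forall>v \<in> VV. finite {w. (v, w) \<in> E}) \<and>
     infinite VV"

definition descendants :: "('a \<times> 'a) set \<Rightarrow> 'a \<Rightarrow> 'a set" where
  "descendants E v = {w. (v, w) \<in> E\<^sup>+}"

definition IAP :: "'a set \<Rightarrow> ('a \<times> 'a) set \<Rightarrow> 'a set set" where
  "IAP VV E = {S. S \<subseteq> VV \<and>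
     \<not> (\<exists>v \<in> S. infinite (S \<inter> descendants E v) \<and> infinite (S - descendants E v))}"

definition CA :: "'a set \<Rightarrow> ('a \<times> 'a) set \<Rightarrow> 'a set set" where
  "CA VV E = {S. S \<subseteq> VV \<and> (\<exists>v \<in> S. \<forall>w \<in> S. w \<noteq> v \<longrightarrow> w \<in> descendants E v)}"

definition REF :: "'a set \<Rightarrow> ('a \<times> 'a) set \<Rightarrow> 'a set set" where
  "REF VV E = {S. S \<subseteq> VV \<and>
     (\<forall>v \<in> S. infinite (descendants E v) \<longrightarrow> infinite (S \<inter> descendants E v))}"

definition maximal_in :: "'a set \<Rightarrow> 'a set set \<Rightarrow> bool" where
  "maximal_in M F \<longleftrightarrow> M \<in> F \<and> \<not> (\<exists>S \<in> F. M \<subset> S)"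

text \<open>Vertices: V i = v_i (i \<ge> 1), W i = w_i (i \<ge> 2), U i = u_i (i \<ge> 2).\<close>
datatype vtx = V nat | W nat | U nat

definition exVerts :: "vtx set" where
  "exVerts = {V i |i. i \<ge> 1} \<union> {W i |i. i \<ge> 2} \<union> {U i |i. i \<ge> 2}"

definition wv :: "nat \<Rightarrow> vtx" where
  "wv i = (if i = 1 then V 1 else W i)"

definition exEdges :: "(vtx \<times> vtx) set" where
  "exEdges = {(V i, V (i + 1)) |i. i \<ge> 1}
           \<union> {(wv i, wv (i + 1)) |i. i \<ge> 1}
           \<union> {(W i, U i) |i. i \<ge> 2}
           \<union> {(U i, V (i + 1)) |i. i \<ge> 2}"

fun exT :: "vtx \<Rightarrow> real" where
  "exT (V i) = real i"
| "exT (W i) = real i"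
| "exT (U i) = real i + 1 / 2"

end

theory Submission
  imports Defs
begin

lemma edge_cases:
  "(x, y) \<in> exEdges \<longleftrightarrow>
    (\<exists>i\<ge>1. x = V i \<and> y = V (i+1)) \<or> (x = V 1 \<and> y = W 2) \<or>
    (\<exists>i\<ge>2. x = W i \<and> y = W (i+1)) \<or> (\<exists>i\<ge>2. x = W i \<and> y = U i) \<or>
    (\<exists>i\<ge>2. x = U i \<and> y = V (i+1))"
proof
  assume "(x, y) \<in> exEdges"
  then show "(\<exists>i\<ge>1. x = V i \<and> y = V (i+1)) \<or> (x = V 1 \<and> y = W 2) \<or>
    (\<exists>i\<ge>2. x = W i \<and> y = W (i+1)) \<or> (\<exists>i\<ge>2. x = W i \<and> y = U i) \<or>
    (\<exists>i\<ge>2. x = U i \<and> y = V (i+1))"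
    unfolding exEdges_def wv_def by (auto split: if_splits)
next
  assume h: "(\<exists>i\<ge>1. x = V i \<and> y = V (i+1)) \<or> (x = V 1 \<and> y = W 2) \<or>
    (\<exists>i\<ge>2. x = W i \<and> y = W (i+1)) \<or> (\<exists>i\<ge>2. x = W i \<and> y = U i) \<or>
    (\<exists>i\<ge>2. x = U i \<and> y = V (i+1))"
  let ?A = "{(V i, V (i + 1)) |i. i \<ge> 1}"
  let ?B = "{(wv i, wv (i + 1)) |i. i \<ge> 1}"
  let ?C = "{(W i, U i) |i. i \<ge> 2}"
  let ?D = "{(U i, V (i + 1)) |i. i \<ge> 2}"
  have eq: "exEdges = ?A \<union> ?B \<union> ?C \<union> ?D" by (rule exEdges_def)
  have "(x, y) \<in> ?A \<union> ?B \<union> ?C \<union> ?D"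
  proof -
    consider (a) i where "i \<ge> 1" "x = V i" "y = V (i+1)" | (b) "x = V 1" "y = W 2"
      | (c) i where "i \<ge> 2" "x = W i" "y = W (i+1)" | (d) i where "i \<ge> 2" "x = W i" "y = U i"
      | (e) i where "i \<ge> 2" "x = U i" "y = V (i+1)"
      using h by blast
    then show ?thesis
    proof cases
      case (a i) then have "(x, y) \<in> ?A" by blast then show ?thesis by blast
    next
      case b then have "(x, y) = (wv 1, wv (1+1))" by (simp add: wv_def)
      then have "(x, y) \<in> ?B" by blast then show ?thesis by blast
    next
      case (c i) then have "(x, y) = (wv i, wv (i+1))" by (simp add: wv_def)
      then have "(x, y) \<in> ?B" using c(1) by auto then show ?thesis by blast
    next
      case (d i) then have "(x, y) \<in> ?C" by blast then show ?thesis by blast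
    next
      case (e i) then have "(x, y) \<in> ?D" by blast then show ?thesis by blast
    qed
  qed
  then show "(x, y) \<in> exEdges" by (subst eq)
qed

lemma fin_t: "finite {v \<in> exVerts. exT v < r}"
proof -
  define n where "n = nat \<lceil>r\<rceil>"
  have "{v \<in> exVerts. exT v < r} \<subseteq> V ` {..n} \<union> W ` {..n} \<union> U ` {..n}"
  proof
    fix x assume "x \<in> {v \<in> exVerts. exT v < r}"
    then have "exT x < r" by simp
    then show "x \<in> V ` {..n} \<union> W ` {..n} \<union> U ` {..n}"
    proof (cases x)
      case (V i) then have "real i \<le> r" using \<open>exT x < r\<close> by simp
      then have "i \<le> n" unfolding n_def by linarith
      then show ?thesis using V by auto
    next
      case (W i) then have "real i \<le> r" using \<open>exT x < r\<close> by simp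
      then have "i \<le> n" unfolding n_def by linarith
      then show ?thesis using W by auto
    next
      case (U i) then have "real i \<le> r" using \<open>exT x < r\<close> by simp
      then have "i \<le> n" unfolding n_def by linarith
      then show ?thesis using U by auto
    qed
  qed
  then show ?thesis by (rule finite_subset) auto
qed

lemma bio: "biosphere exVerts exEdges exT"
  unfolding biosphere_def
proof (intro conjI allI ballI impI)
  show "exEdges \<subseteq> exVerts \<times> exVerts"
    by (auto simp: edge_cases exVerts_def)
  show "(v, w) \<in> exEdges \<Longrightarrow> exT v < exT w" for v w
    by (auto simp: edge_cases)
  show "finite {v \<in> exVerts. exT v < r}" for r by (rule fin_t)
  fix v assume "v \<in> exVerts"
  have "{w. (v, w) \<in> exEdges} \<subseteq> {x \<in> exVerts. exT x < exT v + 2}"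
    by (auto simp: edge_cases exVerts_def)
  then show "finite {w. (v, w) \<in> exEdges}" using fin_t finite_subset by blast
next
  have "V ` {1..} \<subseteq> exVerts" by (auto simp: exVerts_def)
  moreover have "infinite (V ` {1::nat..})"
    using finite_imageD infinite_Ici inj_def by (metis vtx.inject(1) inj_onI)
  ultimately show "infinite exVerts" using finite_subset by blast
qed

abbreviation "E \<equiv> exEdges"

lemma descV: "i \<ge> 1 \<Longrightarrow> j > i \<Longrightarrow> V j \<in> descendants E (V i)"
proof (induction j)
  case 0 then show ?case by simp
next
  case (Suc j)
  have e: "(V j, V (Suc j)) \<in> E" if "j \<ge> 1" using that by (auto simp: edge_cases)
  show ?case
  proof (cases "j = i")
    case True then show ?thesis using Suc e by (auto simp: descendants_def)
  next
    case False
    then have "V j \<in> descendants E (V i)" using Suc by auto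
    then show ?thesis using e Suc unfolding descendants_def
      by (auto intro: trancl_into_trancl)
  qed
qed

lemma descW: "k \<ge> 2 \<Longrightarrow> W k \<in> descendants E (V 1)"
proof (induction k)
  case 0 then show ?case by simp
next
  case (Suc k)
  show ?case
  proof (cases "k = 1")
    case True then show ?thesis by (auto simp: descendants_def edge_cases)
  next
    case False
    then have "W k \<in> descendants E (V 1)" using Suc by auto
    moreover have "(W k, W (Suc k)) \<in> E" using Suc False by (auto simp: edge_cases)
    ultimately show ?thesis unfolding descendants_def
      by (auto intro: trancl_into_trancl)
  qed
qed

lemma descWV: "k \<ge> 2 \<Longrightarrow> j > k \<Longrightarrow> V j \<in> descendants E (W k)"
proof -
  assume k: "k \<ge> 2" and j: "j > k"
  have "(W k, U k) \<in> E" "(U k, V (k+1)) \<in> E" using k by (auto simp: edge_cases)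
  then have 1: "(W k, V (k+1)) \<in> E\<^sup>+" by auto
  show ?thesis
  proof (cases "j = k+1")
    case True then show ?thesis using 1 by (simp add: descendants_def)
  next
    case False
    then have "V j \<in> descendants E (V (k+1))" using descV[of "k+1" j] j by auto
    then show ?thesis using 1 unfolding descendants_def by auto
  qed
qed

lemma descV_sub: "(V i, y) \<in> E\<^sup>+ \<Longrightarrow> i \<ge> 2 \<Longrightarrow> \<exists>j>i. y = V j"
proof (induction rule: trancl_induct)
  case (base y) then show ?case by (auto simp: edge_cases)
next
  case (step y z)
  then obtain j where "j > i" "y = V j" by auto
  with step show ?case by (auto simp: edge_cases)
qed

lemma anc_V2: "(r, V 2) \<in> E\<^sup>+ \<Longrightarrow> r = V 1"
proof -
  have noV1: "(x, V 1) \<notin> E\<^sup>+" for x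
  proof
    assume "(x, V 1) \<in> E\<^sup>+"
    then obtain c where "(c, V 1) \<in> E" by (cases rule: trancl.cases) auto
    then show False by (auto simp: edge_cases)
  qed
  assume "(r, V 2) \<in> E\<^sup>+"
  then show "r = V 1"
  proof (cases rule: trancl.cases)
    case r_into_trancl then show ?thesis by (auto simp: edge_cases)
  next
    case (trancl_into_trancl c)
    then have "c = V 1" by (auto simp: edge_cases)
    then show ?thesis using trancl_into_trancl noV1 by auto
  qed
qed

lemma IAP_insert:
  assumes "S \<in> IAP VV E'" "x \<in> VV"
    "\<not> (infinite (insert x S \<inter> descendants E' x) \<and> infinite (insert x S - descendants E' x))"
  shows "insert x S \<in> IAP VV E'"
proof -
  have "\<not> (infinite (insert x S \<inter> descendants E' v) \<and> infinite (insert x S - descendants E' v))"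
    if "v \<in> S" for v
  proof -
    have "insert x S \<inter> descendants E' v \<subseteq> insert x (S \<inter> descendants E' v)"
      "insert x S - descendants E' v \<subseteq> insert x (S - descendants E' v)" by auto
    then show ?thesis using assms(1) that unfolding IAP_def
      by (metis (no_types, lifting) finite_insert finite_subset mem_Collect_eq)
  qed
  then show ?thesis using assms unfolding IAP_def by auto
qed

lemma REF_insert:
  assumes "S \<in> REF VV E'" "x \<in> VV"
    "infinite (descendants E' x) \<Longrightarrow> infinite (insert x S \<inter> descendants E' x)"
  shows "insert x S \<in> REF VV E'"
proof -
  have "infinite (insert x S \<inter> descendants E' v)" if "v \<in> S" "infinite (descendants E' v)" for v
  proof -
    have "S \<inter> descendants E' v \<subseteq> insert x S \<inter> descendants E' v" by auto
    then show ?thesis using assms(1) that unfolding REF_def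
      using finite_subset by blast
  qed
  then show ?thesis using assms unfolding REF_def by auto
qed

abbreviation "VV \<equiv> exVerts"

theorem mainTheorem12:
  shows "biosphere exVerts exEdges exT \<and>
         \<not> (\<exists>M. maximal_in M (IAP exVerts exEdges \<inter> CA exVerts exEdges \<inter> REF exVerts exEdges)
                 \<and> V 2 \<in> M)"
proof (intro conjI notI)
  show "biosphere exVerts exEdges exT" by (rule bio)
next
  let ?F = "IAP exVerts exEdges \<inter> CA exVerts exEdges \<inter> REF exVerts exEdges"
  assume "\<exists>M. maximal_in M ?F \<and> V 2 \<in> M"
  then obtain M where max: "maximal_in M ?F" and v2: "V 2 \<in> M" by blast
  have MF: "M \<in> ?F" and nobig: "\<And>S. S \<in> ?F \<Longrightarrow> \<not> M \<subset> S"
    using max unfolding maximal_in_def by auto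
  have MI: "M \<in> IAP VV E" and MC: "M \<in> CA VV E" and MR: "M \<in> REF VV E" using MF by auto
  have MV: "M \<subseteq> VV" using MI unfolding IAP_def by auto
  obtain r where r: "r \<in> M" "\<And>w. w \<in> M \<Longrightarrow> w \<noteq> r \<Longrightarrow> w \<in> descendants E r"
    using MC unfolding CA_def by auto
  have "V ` {3..} \<subseteq> descendants E (V 2)" using descV by auto
  moreover have "infinite (V ` {3::nat..})"
    using finite_imageD infinite_Ici inj_def by (metis vtx.inject(1) inj_onI)
  ultimately have infD2: "infinite (descendants E (V 2))" using finite_subset by blast
  have infM2: "infinite (M \<inter> descendants E (V 2))"
    using MR v2 infD2 unfolding REF_def by auto
  have finM2: "finite (M - descendants E (V 2))"
    using MI v2 infM2 unfolding IAP_def by auto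
  have D2V: "y \<in> descendants E (V 2) \<Longrightarrow> \<exists>j>2. y = V j" for y
    using descV_sub[of 2 y] unfolding descendants_def by auto
  have V12: "V 2 \<in> descendants E (V 1)" using descV by auto
  have D21: "descendants E (V 2) \<subseteq> descendants E (V 1)"
    using V12 unfolding descendants_def by auto
  have V1V: "V 1 \<in> VV" by (auto simp: exVerts_def)
  show False
  proof (cases "V 1 \<in> M")
    case False
    have rV2: "r = V 2"
    proof (rule ccontr)
      assume "r \<noteq> V 2"
      then have "V 2 \<in> descendants E r" using r v2 by auto
      then have "r = V 1" using anc_V2 unfolding descendants_def by auto
      then show False using r False by auto
    qed
    let ?S = "insert (V 1) M"
    have sub: "?S - descendants E (V 1) \<subseteq> {V 1}"
    proof
      fix x assume x: "x \<in> ?S - descendants E (V 1)"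
      show "x \<in> {V 1}"
      proof (rule ccontr)
        assume "x \<notin> {V 1}"
        then have "x \<in> M" "x \<notin> descendants E (V 1)" using x by auto
        then show False using r rV2 V12 D21 by blast
      qed
    qed
    have "?S \<in> IAP VV E"
      by (rule IAP_insert[OF MI V1V]) (metis finite.emptyI finite_insert finite_subset sub)
    moreover have "?S \<in> REF VV E"
    proof (rule REF_insert[OF MR V1V])
      have "M \<inter> descendants E (V 2) \<subseteq> ?S \<inter> descendants E (V 1)" using D21 by auto
      then show "infinite (?S \<inter> descendants E (V 1))" using infM2 finite_subset by blast
    qed
    moreover have "?S \<in> CA VV E"
      unfolding CA_def using MV V1V r rV2 V12 D21 by blast
    ultimately have "?S \<in> ?F" by auto
    moreover have "M \<subset> ?S" using False by auto
    ultimately show False using nobig by blast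
  next
    case True
    have rV1: "r = V 1"
    proof (rule ccontr)
      assume "r \<noteq> V 1"
      then have "r = V 2"
        using r v2 anc_V2 unfolding descendants_def by auto
      then have "V 1 \<in> descendants E (V 2)" using r True by auto
      then show False using D2V by fastforce
    qed
    obtain k where k: "k \<ge> 2" "W k \<notin> M"
    proof -
      have "\<exists>k\<ge>2. W k \<notin> M"
      proof (rule ccontr)
        assume "\<not> (\<exists>k\<ge>2. W k \<notin> M)"
        then have "W ` {2..} \<subseteq> M - descendants E (V 2)" using D2V by auto
        moreover have "infinite (W ` {2::nat..})"
          using finite_imageD infinite_Ici inj_def by (metis vtx.inject(2) inj_onI)
        ultimately show False using finM2 finite_subset by blast
      qed
      then show ?thesis using that by blast
    qed
    let ?S = "insert (W k) M"
    have WV: "W k \<in> VV" using k by (auto simp: exVerts_def)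
    have sub: "?S - descendants E (W k) \<subseteq> insert (W k) ((M - descendants E (V 2)) \<union> V ` {..k})"
    proof
      fix x assume x: "x \<in> ?S - descendants E (W k)"
      show "x \<in> insert (W k) ((M - descendants E (V 2)) \<union> V ` {..k})"
      proof (cases "x \<in> descendants E (V 2) \<and> x \<noteq> W k")
        case True
        then obtain j where "x = V j" "j > 2" using D2V by blast
        moreover have "j \<le> k"
        proof (rule ccontr)
          assume "\<not> j \<le> k"
          then have "x \<in> descendants E (W k)" using descWV k \<open>x = V j\<close> by auto
          then show False using x by auto
        qed
        ultimately show ?thesis by auto
      next
        case False then show ?thesis using x by auto
      qed
    qed
    have "?S \<in> IAP VV E"
      by (rule IAP_insert[OF MI WV]) (metis finM2 finite_Un finite_imageI finite_atMost finite_insert finite_subset sub)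
    moreover have "?S \<in> REF VV E"
    proof (rule REF_insert[OF MR WV])
      have "(M \<inter> descendants E (V 2)) - V ` {..k} \<subseteq> ?S \<inter> descendants E (W k)"
      proof
        fix x assume x: "x \<in> (M \<inter> descendants E (V 2)) - V ` {..k}"
        then obtain j where "x = V j" using D2V by blast
        then have "j > k" using x by auto
        then show "x \<in> ?S \<inter> descendants E (W k)" using descWV k x \<open>x = V j\<close> by auto
      qed
      moreover have "infinite ((M \<inter> descendants E (V 2)) - V ` {..k})"
        using infM2 by auto
      ultimately show "infinite (?S \<inter> descendants E (W k))" using finite_subset by blast
    qed
    moreover have "?S \<in> CA VV E"
      unfolding CA_def using MV WV r rV1 descW k by blast
    ultimately have "?S \<in> ?F" by auto
    moreover have "M \<subset> ?S" using k by auto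
    ultimately show False using nobig by blast
  qed
qed

end
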